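(* The center of $U_3$ is $$Z(U_3)=\{(x_1+f_1,\,x_2,\,x_3)\mid f_1=f_1(x_2,x_3)\in S\}.$$
   Context: $K$ is a field of characteristic zero, $A_3=K\langle x_1,x_2,x_3\rangle$ the free associative $K$-algebra with unity. $U_3$ is the group of unitriangular automorphisms of $A_3$: all automorphisms $(x_1+f_1,\,x_2+f_2,\,x_3+f_3)$ (meaning $x_i\mapsto x_i+f_i$) with $f_1\in K\langle x_2,x_3\rangle$, $f_2\in K\langle x_3\rangle$, $f_3\in K$. $S=\{f\in K\langle x_2,x_3\rangle\mid f(x_2+g(x_3),\,x_3+h)=f(x_2,x_3)\text{ for all }g(x_3)\in K\langle x_3\rangle,\ h\in K\}$. *)

theory Defs
  imports "HOL-Library.FuncSet"
begin

text \<open>Free associative algebra A_3 = K<x_1,x_2,x_3>: a noncommutative polynomial is a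
finitely supported coefficient function on words (lists) over the variable indices 1,2,3.
Variable x_i is the one-letter word [i].\<close>

definition nc_polys :: "nat set \<Rightarrow> (nat list \<Rightarrow> 'k::zero) set" where
  "nc_polys V = {p. finite {w. p w \<noteq> 0} \<and> (\<forall>w. p w \<noteq> 0 \<longrightarrow> set w \<subseteq> V)}"

abbreviation A3 :: "(nat list \<Rightarrow> 'k::zero) set" where
  "A3 \<equiv> nc_polys {1,2,3}"

definition nc_zero :: "nat list \<Rightarrow> 'k::zero" where
  "nc_zero = (\<lambda>_. 0)"

definition nc_const :: "'k::zero \<Rightarrow> nat list \<Rightarrow> 'k" where
  "nc_const c = (\<lambda>w. if w = [] then c else 0)"

definition nc_var :: "nat \<Rightarrow> nat list \<Rightarrow> 'k::{zero,one}" where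
  "nc_var i = (\<lambda>w. if w = [i] then 1 else 0)"

definition nc_add :: "(nat list \<Rightarrow> 'k::plus) \<Rightarrow> (nat list \<Rightarrow> 'k) \<Rightarrow> nat list \<Rightarrow> 'k" where
  "nc_add p q = (\<lambda>w. p w + q w)"

definition nc_mult :: "(nat list \<Rightarrow> 'k::comm_semiring_1) \<Rightarrow> (nat list \<Rightarrow> 'k) \<Rightarrow> nat list \<Rightarrow> 'k" where
  "nc_mult p q = (\<lambda>w. \<Sum>i\<le>length w. p (take i w) * q (drop i w))"

definition nc_word_eval :: "(nat \<Rightarrow> nat list \<Rightarrow> 'k::comm_semiring_1) \<Rightarrow> nat list \<Rightarrow> nat list \<Rightarrow> 'k" where
  "nc_word_eval phi w = foldr (\<lambda>i acc. nc_mult (phi i) acc) w (nc_const 1)"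

definition nc_subst :: "(nat \<Rightarrow> nat list \<Rightarrow> 'k::comm_semiring_1) \<Rightarrow> (nat list \<Rightarrow> 'k) \<Rightarrow> nat list \<Rightarrow> 'k" where
  "nc_subst phi p = (\<lambda>v. \<Sum>w\<in>{w. p w \<noteq> 0}. p w * nc_word_eval phi w v)"

definition tri_map :: "(nat list \<Rightarrow> 'k::comm_semiring_1) \<Rightarrow> (nat list \<Rightarrow> 'k) \<Rightarrow> (nat list \<Rightarrow> 'k)
    \<Rightarrow> (nat list \<Rightarrow> 'k) \<Rightarrow> nat list \<Rightarrow> 'k" where
  "tri_map f1 f2 f3 = (\<lambda>p\<in>A3. nc_subst (\<lambda>i. if i = 1 then nc_add (nc_var 1) f1
                                        else if i = 2 then nc_add (nc_var 2) f2
                                        else nc_add (nc_var 3) f3) p)"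

definition U3 :: "((nat list \<Rightarrow> 'k::field_char_0) \<Rightarrow> (nat list \<Rightarrow> 'k)) set" where
  "U3 = {tri_map f1 f2 f3 | f1 f2 f3.
          f1 \<in> nc_polys {2,3} \<and> f2 \<in> nc_polys {3} \<and> f3 \<in> nc_polys {} \<and>
          bij_betw (tri_map f1 f2 f3) A3 A3}"

definition U3_center :: "((nat list \<Rightarrow> 'k::field_char_0) \<Rightarrow> (nat list \<Rightarrow> 'k)) set" where
  "U3_center = {\<alpha> \<in> U3. \<forall>\<beta>\<in>U3. compose A3 \<alpha> \<beta> = compose A3 \<beta> \<alpha>}"

definition S_inv :: "(nat list \<Rightarrow> 'k::field_char_0) set" where
  "S_inv = {f \<in> nc_polys {2,3}. \<forall>g\<in>nc_polys {3}. \<forall>h::'k.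
      nc_subst (\<lambda>i. if i = 2 then nc_add (nc_var 2) g
                    else if i = 3 then nc_add (nc_var 3) (nc_const h)
                    else nc_var i) f = f}"

end

theory Submission
  imports Defs
begin

definition dl :: "nat list \<Rightarrow> nat list \<Rightarrow> 'k::comm_ring_1" where
  "dl u = (\<lambda>w. if w = u then 1 else 0)"

abbreviation fs :: "(nat list \<Rightarrow> 'k::zero) \<Rightarrow> bool" where
  "fs p \<equiv> finite {w. p w \<noteq> 0}"

lemma expand:
  fixes p :: "nat list \<Rightarrow> 'k::comm_ring_1"
  assumes "finite F" "{w. p w \<noteq> 0} \<subseteq> F"
  shows "p w = (\<Sum>u\<in>F. p u * dl u w)"
proof -
  have "(\<Sum>u\<in>F. p u * dl u w) = (\<Sum>u\<in>F. if u = w then p u else 0)"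
    by (rule sum.cong[OF refl]) (simp add: dl_def)
  also have "\<dots> = (if w \<in> F then p w else 0)" by (rule sum.delta[OF assms(1)])
  also have "\<dots> = p w"
  proof (cases "w \<in> F")
    case False
    then have "p w = 0" using assms(2) by blast
    then show ?thesis using False by simp
  qed simp
  finally show ?thesis by simp
qed

lemma expand_fun:
  fixes p :: "nat list \<Rightarrow> 'k::comm_ring_1"
  assumes "finite F" "{w. p w \<noteq> 0} \<subseteq> F"
  shows "p = (\<lambda>w. \<Sum>u\<in>F. p u * dl u w)"
  by (rule ext) (rule expand[OF assms])

lemma take_drop_iff:
  assumes "i \<le> length w"
  shows "(take i w = u \<and> drop i w = v) \<longleftrightarrow> (i = length u \<and> w = u @ v)"
proof
  assume H: "take i w = u \<and> drop i w = v"
  then have "w = u @ v" by (metis append_take_drop_id)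
  moreover have "length u = i" using H assms by auto
  ultimately show "i = length u \<and> w = u @ v" by simp
next
  assume "i = length u \<and> w = u @ v"
  then show "take i w = u \<and> drop i w = v" by simp
qed

lemma dl_mult_sum:
  "(\<Sum>i\<le>length w. dl u (take i w) * dl v (drop i w)) = (dl (u@v) w :: 'k::comm_ring_1)"
proof -
  have "(\<Sum>i\<le>length w. dl u (take i w) * dl v (drop i w))
      = (\<Sum>i\<le>length w. if i = length u then (if w = u @ v then (1::'k) else 0) else 0)"
  proof (rule sum.cong[OF refl])
    fix i assume i: "i \<in> {..length w}"
    have "dl u (take i w) * dl v (drop i w) = (if take i w = u \<and> drop i w = v then (1::'k) else 0)"
      by (simp add: dl_def)
    also have "\<dots> = (if i = length u \<and> w = u @ v then (1::'k) else 0)"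
      using take_drop_iff[of i w u v] i by simp
    finally show "dl u (take i w) * dl v (drop i w) = (if i = length u then (if w = u @ v then (1::'k) else 0) else 0)"
      by simp
  qed
  also have "\<dots> = dl (u@v) w"
    by (cases "w = u @ v") (simp_all add: dl_def)
  finally show ?thesis .
qed

lemma dl_mult: "nc_mult (dl u) (dl v) = (dl (u@v) :: nat list \<Rightarrow> 'k::comm_ring_1)"
  unfolding nc_mult_def using dl_mult_sum by (auto intro!: ext)

lemma mult_comb:
  fixes f :: "'a \<Rightarrow> nat list \<Rightarrow> 'k::comm_ring_1"
  shows "nc_mult (\<lambda>w. \<Sum>x\<in>A. a x * f x w) (\<lambda>w. \<Sum>y\<in>B. b y * g y w)
       = (\<lambda>w. \<Sum>x\<in>A. \<Sum>y\<in>B. a x * b y * nc_mult (f x) (g y) w)"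
proof (rule ext)
  fix w
  have "nc_mult (\<lambda>w. \<Sum>x\<in>A. a x * f x w) (\<lambda>w. \<Sum>y\<in>B. b y * g y w) w
      = (\<Sum>i\<le>length w. \<Sum>x\<in>A. \<Sum>y\<in>B. a x * b y * (f x (take i w) * g y (drop i w)))"
    unfolding nc_mult_def by (simp add: sum_product algebra_simps)
  also have "\<dots> = (\<Sum>x\<in>A. \<Sum>i\<le>length w. \<Sum>y\<in>B. a x * b y * (f x (take i w) * g y (drop i w)))"
    by (rule sum.swap)
  also have "\<dots> = (\<Sum>x\<in>A. \<Sum>y\<in>B. \<Sum>i\<le>length w. a x * b y * (f x (take i w) * g y (drop i w)))"
    by (rule sum.cong[OF refl], rule sum.swap)
  also have "\<dots> = (\<Sum>x\<in>A. \<Sum>y\<in>B. a x * b y * nc_mult (f x) (g y) w)"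
    unfolding nc_mult_def by (simp add: sum_distrib_left)
  finally show "nc_mult (\<lambda>w. \<Sum>x\<in>A. a x * f x w) (\<lambda>w. \<Sum>y\<in>B. b y * g y w) w
       = (\<Sum>x\<in>A. \<Sum>y\<in>B. a x * b y * nc_mult (f x) (g y) w)" .
qed

lemma mult_expand:
  fixes p q :: "nat list \<Rightarrow> 'k::comm_ring_1"
  assumes "finite P" "{w. p w \<noteq> 0} \<subseteq> P" "finite Q" "{w. q w \<noteq> 0} \<subseteq> Q"
  shows "nc_mult p q = (\<lambda>w. \<Sum>u\<in>P. \<Sum>v\<in>Q. p u * q v * dl (u@v) w)"
proof -
  have "nc_mult p q = nc_mult (\<lambda>w. \<Sum>u\<in>P. p u * dl u w) (\<lambda>w. \<Sum>v\<in>Q. q v * dl v w)"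
    using expand_fun[OF assms(1,2)] expand_fun[OF assms(3,4)] by metis
  also have "\<dots> = (\<lambda>w. \<Sum>u\<in>P. \<Sum>v\<in>Q. p u * q v * dl (u@v) w)"
    by (simp add: mult_comb dl_mult)
  finally show ?thesis .
qed

lemma supp_mult:
  fixes p q :: "nat list \<Rightarrow> 'k::comm_ring_1"
  assumes "nc_mult p q w \<noteq> 0"
  shows "\<exists>u v. w = u @ v \<and> p u \<noteq> 0 \<and> q v \<noteq> 0"
proof -
  from assms obtain i where "p (take i w) * q (drop i w) \<noteq> 0"
    unfolding nc_mult_def by (meson sum.not_neutral_contains_not_neutral)
  then show ?thesis by (metis append_take_drop_id mult_not_zero)
qed

lemma supp_mult_sub:
  fixes p q :: "nat list \<Rightarrow> 'k::comm_ring_1"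
  shows "{w. nc_mult p q w \<noteq> 0} \<subseteq> (\<lambda>(u,v). u @ v) ` ({u. p u \<noteq> 0} \<times> {v. q v \<noteq> 0})"
  using supp_mult by fastforce

lemma fs_mult:
  fixes p q :: "nat list \<Rightarrow> 'k::comm_ring_1"
  assumes "fs p" "fs q" shows "fs (nc_mult p q)"
  using supp_mult_sub[of p q] assms by (meson finite_SigmaI finite_imageI finite_subset)

lemma sum_prod_nest: "sum h (A \<times> B) = (\<Sum>a\<in>A. \<Sum>b\<in>B. h (a,b))"
  by (simp add: sum.cartesian_product)

lemma mult_assoc:
  fixes p q r :: "nat list \<Rightarrow> 'k::comm_ring_1"
  assumes "fs p" "fs q" "fs r"
  shows "nc_mult (nc_mult p q) r = nc_mult p (nc_mult q r)"
proof -
  define P where "P = {w. p w \<noteq> 0}"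
  define Q where "Q = {w. q w \<noteq> 0}"
  define R where "R = {w. r w \<noteq> 0}"
  have fin: "finite P" "finite Q" "finite R" using assms by (auto simp: P_def Q_def R_def)
  have ep: "p = (\<lambda>w. \<Sum>u\<in>P. p u * dl u w)" using expand_fun fin P_def by blast
  have eq: "q = (\<lambda>w. \<Sum>u\<in>Q. q u * dl u w)" using expand_fun fin Q_def by blast
  have er: "r = (\<lambda>w. \<Sum>u\<in>R. r u * dl u w)" using expand_fun fin R_def by blast
  have "nc_mult p q = (\<lambda>w. \<Sum>u\<in>P. \<Sum>v\<in>Q. p u * q v * dl (u@v) w)"
    by (rule mult_expand) (use fin in \<open>auto simp: P_def Q_def\<close>)
  then have pq: "nc_mult p q = (\<lambda>w. \<Sum>x\<in>P\<times>Q. (p (fst x) * q (snd x)) * dl (fst x @ snd x) w)"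
    by (simp add: sum.cartesian_product case_prod_beta)
  have "nc_mult q r = (\<lambda>w. \<Sum>u\<in>Q. \<Sum>v\<in>R. q u * r v * dl (u@v) w)"
    by (rule mult_expand) (use fin in \<open>auto simp: R_def Q_def\<close>)
  then have qr: "nc_mult q r = (\<lambda>w. \<Sum>x\<in>Q\<times>R. (q (fst x) * r (snd x)) * dl (fst x @ snd x) w)"
    by (simp add: sum.cartesian_product case_prod_beta)
  have "nc_mult (nc_mult p q) r = (\<lambda>w. \<Sum>x\<in>P\<times>Q. \<Sum>z\<in>R. p (fst x) * q (snd x) * r z * dl (fst x @ snd x @ z) w)"
    apply (subst pq, subst er)
    by (simp add: mult_comb dl_mult)
  also have "\<dots> = (\<lambda>w. \<Sum>u\<in>P. \<Sum>y\<in>Q\<times>R. p u * (q (fst y) * r (snd y)) * dl (u @ fst y @ snd y) w)"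
    by (rule ext) (simp only: sum_prod_nest fst_conv snd_conv mult.assoc)
  also have "\<dots> = nc_mult p (nc_mult q r)"
    apply (subst qr, subst (2) ep)
    by (simp add: mult_comb dl_mult)
  finally show ?thesis .
qed


abbreviation E where "E \<equiv> nc_word_eval"

lemma we_Nil[simp]: "nc_word_eval phi [] = nc_const 1"
  by (simp add: nc_word_eval_def)

lemma we_Cons[simp]: "nc_word_eval phi (a#w) = nc_mult (phi a) (nc_word_eval phi w)"
  by (simp add: nc_word_eval_def)

lemma const1_dl: "(nc_const 1 :: nat list \<Rightarrow> 'k::comm_ring_1) = dl []"
  by (auto simp: nc_const_def dl_def)

lemma var_dl: "(nc_var i :: nat list \<Rightarrow> 'k::comm_ring_1) = dl [i]"
  by (auto simp: nc_var_def dl_def)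

lemma mult_one_left:
  fixes p :: "nat list \<Rightarrow> 'k::comm_ring_1"
  shows "nc_mult (nc_const 1) p = p"
proof (rule ext)
  fix w
  have "nc_mult (nc_const 1) p w = (\<Sum>i\<le>length w. if i = 0 then p w else 0)"
    unfolding nc_mult_def
  proof (rule sum.cong[OF refl])
    fix i assume "i \<in> {..length w}"
    then show "nc_const 1 (take i w) * p (drop i w) = (if i = 0 then p w else 0)"
      by (cases "w = []") (auto simp: nc_const_def)
  qed
  also have "\<dots> = p w" by simp
  finally show "nc_mult (nc_const 1) p w = p w" .
qed

lemma mult_one_right:
  fixes p :: "nat list \<Rightarrow> 'k::comm_ring_1"
  shows "nc_mult p (nc_const 1) = p"
proof (rule ext)
  fix w
  have "nc_mult p (nc_const 1) w = (\<Sum>i\<le>length w. if i = length w then p w else 0)"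
    unfolding nc_mult_def
  proof (rule sum.cong[OF refl])
    fix i assume "i \<in> {..length w}"
    then show "p (take i w) * nc_const 1 (drop i w) = (if i = length w then p w else 0)"
      by (auto simp: nc_const_def)
  qed
  also have "\<dots> = p w" by simp
  finally show "nc_mult p (nc_const 1) w = p w" .
qed

lemma fs_const: "fs (nc_const c)"
proof -
  have "{w. nc_const c w \<noteq> 0} \<subseteq> {[]}" by (auto simp: nc_const_def)
  then show ?thesis using finite_subset by blast
qed

lemma fs_we:
  fixes phi :: "nat \<Rightarrow> nat list \<Rightarrow> 'k::comm_ring_1"
  assumes "\<forall>i. fs (phi i)" shows "fs (E phi w)"
  by (induction w) (simp_all add: fs_const fs_mult assms)

lemma we_append:
  fixes phi :: "nat \<Rightarrow> nat list \<Rightarrow> 'k::comm_ring_1"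
  assumes "\<forall>i. fs (phi i)"
  shows "E phi (u@v) = nc_mult (E phi u) (E phi v)"
proof (induction u)
  case Nil
  then show ?case by (simp add: mult_one_left)
next
  case (Cons a u)
  then show ?case by (simp add: mult_assoc fs_we assms)
qed

lemma subst_F:
  fixes p :: "nat list \<Rightarrow> 'k::comm_ring_1"
  assumes "finite F" "{w. p w \<noteq> 0} \<subseteq> F"
  shows "nc_subst phi p = (\<lambda>v. \<Sum>w\<in>F. p w * E phi w v)"
proof (rule ext)
  fix v
  show "nc_subst phi p v = (\<Sum>w\<in>F. p w * E phi w v)"
    unfolding nc_subst_def
    by (rule sum.mono_neutral_left) (use assms in auto)
qed

lemma subst_lin:
  fixes f :: "'a \<Rightarrow> nat list \<Rightarrow> 'k::comm_ring_1"
  assumes A: "finite A" and fx: "\<forall>x\<in>A. fs (f x)"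
  shows "nc_subst phi (\<lambda>w. \<Sum>x\<in>A. c x * f x w) = (\<lambda>v. \<Sum>x\<in>A. c x * nc_subst phi (f x) v)"
proof -
  define F where "F = (\<Union>x\<in>A. {w. f x w \<noteq> 0})"
  have finF: "finite F" using A fx by (simp add: F_def)
  have sub: "{w. (\<Sum>x\<in>A. c x * f x w) \<noteq> 0} \<subseteq> F"
  proof
    fix w assume "w \<in> {w. (\<Sum>x\<in>A. c x * f x w) \<noteq> 0}"
    then obtain x where "x \<in> A" "c x * f x w \<noteq> 0"
      by (auto dest: sum.not_neutral_contains_not_neutral)
    then have "f x w \<noteq> 0" by auto
    then show "w \<in> F" using \<open>x \<in> A\<close> by (auto simp: F_def)
  qed
  have subx: "\<And>x. x \<in> A \<Longrightarrow> {w. f x w \<noteq> 0} \<subseteq> F" by (auto simp: F_def)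
  have "nc_subst phi (\<lambda>w. \<Sum>x\<in>A. c x * f x w) = (\<lambda>v. \<Sum>w\<in>F. (\<Sum>x\<in>A. c x * f x w) * E phi w v)"
    by (rule subst_F[OF finF sub])
  also have "\<dots> = (\<lambda>v. \<Sum>x\<in>A. c x * (\<Sum>w\<in>F. f x w * E phi w v))"
    by (rule ext) (simp add: sum_distrib_right sum_distrib_left mult.assoc sum.swap[of _ F])
  also have "\<dots> = (\<lambda>v. \<Sum>x\<in>A. c x * nc_subst phi (f x) v)"
    by (rule ext, rule sum.cong[OF refl]) (simp add: subst_F[OF finF subx])
  finally show ?thesis .
qed

lemma subst_dl: "nc_subst phi (dl u :: nat list \<Rightarrow> 'k::comm_ring_1) = E phi u"
proof -
  have "nc_subst phi (dl u :: nat list \<Rightarrow> 'k::comm_ring_1) = (\<lambda>v. \<Sum>w\<in>{u}. dl u w * E phi w v)"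
    by (rule subst_F) (auto simp: dl_def)
  then show ?thesis by (simp add: dl_def)
qed

lemma fs_dl: "fs (dl u :: nat list \<Rightarrow> 'k::comm_ring_1)"
proof -
  have "{w. (dl u :: nat list \<Rightarrow> 'k) w \<noteq> 0} \<subseteq> {u}" by (auto simp: dl_def)
  then show ?thesis using finite_subset by blast
qed

lemma subst_mult:
  fixes p q :: "nat list \<Rightarrow> 'k::comm_ring_1"
  assumes "fs p" "fs q" and phi: "\<forall>i. fs (phi i)"
  shows "nc_subst phi (nc_mult p q) = nc_mult (nc_subst phi p) (nc_subst phi q)"
proof -
  define P where "P = {w. p w \<noteq> 0}"
  define Q where "Q = {w. q w \<noteq> 0}"
  have fin: "finite P" "finite Q" using assms by (auto simp: P_def Q_def)
  have "nc_mult p q = (\<lambda>w. \<Sum>u\<in>P. \<Sum>v\<in>Q. p u * q v * dl (u@v) w)"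
    by (rule mult_expand) (use fin in \<open>auto simp: P_def Q_def\<close>)
  then have pq: "nc_mult p q = (\<lambda>w. \<Sum>x\<in>P\<times>Q. (p (fst x) * q (snd x)) * dl (fst x @ snd x) w)"
    by (simp add: sum.cartesian_product case_prod_beta)
  have "nc_subst phi (nc_mult p q) = (\<lambda>v. \<Sum>x\<in>P\<times>Q. (p (fst x) * q (snd x)) * nc_subst phi (dl (fst x @ snd x)) v)"
    unfolding pq by (rule subst_lin) (use fin fs_dl in auto)
  also have "\<dots> = (\<lambda>v. \<Sum>u\<in>P. \<Sum>w\<in>Q. p u * q w * nc_mult (E phi u) (E phi w) v)"
    by (rule ext) (simp add: sum_prod_nest subst_dl we_append[OF phi])
  also have "\<dots> = nc_mult (\<lambda>v. \<Sum>u\<in>P. p u * E phi u v) (\<lambda>v. \<Sum>w\<in>Q. q w * E phi w v)"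
    by (simp add: mult_comb)
  also have "\<dots> = nc_mult (nc_subst phi p) (nc_subst phi q)"
    by (simp add: subst_F[OF fin(1)] subst_F[OF fin(2)] P_def Q_def)
  finally show ?thesis .
qed

lemma fs_subst:
  fixes p :: "nat list \<Rightarrow> 'k::comm_ring_1"
  assumes "fs p" and phi: "\<forall>i. fs (phi i)"
  shows "fs (nc_subst phi p)"
proof -
  have "{v. nc_subst phi p v \<noteq> 0} \<subseteq> (\<Union>w\<in>{w. p w \<noteq> 0}. {v. E phi w v \<noteq> 0})"
  proof
    fix v assume "v \<in> {v. nc_subst phi p v \<noteq> 0}"
    then obtain w where "w \<in> {w. p w \<noteq> 0}" "p w * E phi w v \<noteq> 0"
      unfolding nc_subst_def by (auto dest: sum.not_neutral_contains_not_neutral)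
    then show "v \<in> (\<Union>w\<in>{w. p w \<noteq> 0}. {v. E phi w v \<noteq> 0})" by auto
  qed
  moreover have "finite (\<Union>w\<in>{w. p w \<noteq> 0}. {v. E phi w v \<noteq> 0})"
    using assms fs_we[OF phi] by auto
  ultimately show ?thesis using finite_subset by blast
qed

lemma subst_we:
  fixes phi psi :: "nat \<Rightarrow> nat list \<Rightarrow> 'k::comm_ring_1"
  assumes phi: "\<forall>i. fs (phi i)" and psi: "\<forall>i. fs (psi i)"
  shows "nc_subst psi (E phi w) = E (\<lambda>i. nc_subst psi (phi i)) w"
proof (induction w)
  case Nil
  then show ?case by (simp add: const1_dl subst_dl)
next
  case (Cons a w)
  then show ?case by (simp add: subst_mult fs_we phi psi)
qed

lemma subst_comp:
  fixes p :: "nat list \<Rightarrow> 'k::comm_ring_1"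
  assumes p: "fs p" and phi: "\<forall>i. fs (phi i)" and psi: "\<forall>i. fs (psi i)"
  shows "nc_subst psi (nc_subst phi p) = nc_subst (\<lambda>i. nc_subst psi (phi i)) p"
proof -
  have "nc_subst psi (nc_subst phi p) = nc_subst psi (\<lambda>v. \<Sum>w\<in>{w. p w \<noteq> 0}. p w * E phi w v)"
    by (simp add: nc_subst_def)
  also have "\<dots> = (\<lambda>v. \<Sum>w\<in>{w. p w \<noteq> 0}. p w * nc_subst psi (E phi w) v)"
    by (rule subst_lin) (use p fs_we[OF phi] in auto)
  also have "\<dots> = (\<lambda>v. \<Sum>w\<in>{w. p w \<noteq> 0}. p w * E (\<lambda>i. nc_subst psi (phi i)) w v)"
    by (simp only: subst_we[OF phi psi])
  also have "\<dots> = nc_subst (\<lambda>i. nc_subst psi (phi i)) p"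
    by (simp only: nc_subst_def)
  finally show ?thesis .
qed


lemma polys_iff: "p \<in> nc_polys V \<longleftrightarrow> fs p \<and> (\<forall>w. p w \<noteq> 0 \<longrightarrow> set w \<subseteq> V)"
  by (simp add: nc_polys_def)

lemma polys_mono: "V \<subseteq> W \<Longrightarrow> nc_polys V \<subseteq> nc_polys W"
  by (auto simp: nc_polys_def)

lemma polys_mult:
  fixes p q :: "nat list \<Rightarrow> 'k::comm_ring_1"
  assumes "p \<in> nc_polys V" "q \<in> nc_polys V"
  shows "nc_mult p q \<in> nc_polys V"
proof -
  have "fs (nc_mult p q)" using assms fs_mult by (auto simp: polys_iff)
  moreover have "set w \<subseteq> V" if nz: "nc_mult p q w \<noteq> 0" for w
  proof -
    obtain u v where "w = u @ v" "p u \<noteq> 0" "q v \<noteq> 0" using supp_mult[OF nz] by blast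
    then show ?thesis using assms by (auto simp: polys_iff)
  qed
  ultimately show ?thesis by (simp add: polys_iff)
qed

lemma polys_const: "nc_const c \<in> nc_polys V"
  using fs_const by (auto simp: polys_iff nc_const_def)

lemma polys_var: "i \<in> V \<Longrightarrow> (nc_var i :: nat list \<Rightarrow> 'k::comm_ring_1) \<in> nc_polys V"
  using fs_dl[of "[i]"] by (auto simp: polys_iff var_dl dl_def)

lemma polys_add:
  fixes p q :: "nat list \<Rightarrow> 'k::comm_ring_1"
  assumes "p \<in> nc_polys V" "q \<in> nc_polys V"
  shows "nc_add p q \<in> nc_polys V"
proof -
  have "{w. nc_add p q w \<noteq> 0} \<subseteq> {w. p w \<noteq> 0} \<union> {w. q w \<noteq> 0}" by (auto simp: nc_add_def)
  moreover have "finite ({w. p w \<noteq> 0} \<union> {w. q w \<noteq> 0})" using assms by (auto simp: polys_iff)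
  ultimately have "fs (nc_add p q)" using finite_subset by blast
  moreover have "set w \<subseteq> V" if nz: "nc_add p q w \<noteq> 0" for w
  proof -
    have "p w \<noteq> 0 \<or> q w \<noteq> 0" using nz by (auto simp: nc_add_def)
    then show ?thesis using assms by (auto simp: polys_iff)
  qed
  ultimately show ?thesis by (simp add: polys_iff)
qed

lemma polys_zero: "nc_zero \<in> nc_polys V"
  by (simp add: polys_iff nc_zero_def)

lemma polys_neg:
  fixes p :: "nat list \<Rightarrow> 'k::comm_ring_1"
  shows "p \<in> nc_polys V \<Longrightarrow> (\<lambda>w. - p w) \<in> nc_polys V"
  by (simp add: polys_iff)

lemma polys_we:
  fixes phi :: "nat \<Rightarrow> nat list \<Rightarrow> 'k::comm_ring_1"
  shows "\<forall>i\<in>set w. phi i \<in> nc_polys V \<Longrightarrow> E phi w \<in> nc_polys V"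
  by (induction w) (simp_all add: polys_const polys_mult)

lemma polys_subst:
  fixes p :: "nat list \<Rightarrow> 'k::comm_ring_1"
  assumes p: "p \<in> nc_polys W" and phi: "\<forall>i\<in>W. phi i \<in> nc_polys V"
  shows "nc_subst phi p \<in> nc_polys V"
proof -
  have Ew: "E phi w \<in> nc_polys V" if "p w \<noteq> 0" for w
    using p phi that by (intro polys_we) (auto simp: polys_iff)
  have sub: "{v. nc_subst phi p v \<noteq> 0} \<subseteq> (\<Union>w\<in>{w. p w \<noteq> 0}. {v. E phi w v \<noteq> 0})"
  proof
    fix v assume "v \<in> {v. nc_subst phi p v \<noteq> 0}"
    then obtain w where "w \<in> {w. p w \<noteq> 0}" "p w * E phi w v \<noteq> 0"
      unfolding nc_subst_def by (auto dest: sum.not_neutral_contains_not_neutral)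
    then show "v \<in> (\<Union>w\<in>{w. p w \<noteq> 0}. {v. E phi w v \<noteq> 0})" by auto
  qed
  moreover have "finite (\<Union>w\<in>{w. p w \<noteq> 0}. {v. E phi w v \<noteq> 0})"
    using p Ew by (auto simp: polys_iff)
  ultimately have "fs (nc_subst phi p)" using finite_subset by blast
  moreover have "set v \<subseteq> V" if "nc_subst phi p v \<noteq> 0" for v
  proof -
    from sub that obtain w where "p w \<noteq> 0" "E phi w v \<noteq> 0" by blast
    then show ?thesis using Ew by (auto simp: polys_iff)
  qed
  ultimately show ?thesis by (simp add: polys_iff)
qed

lemma we_cong: "set w \<subseteq> V \<Longrightarrow> \<forall>i\<in>V. phi i = psi i \<Longrightarrow> E phi w = E psi w"
  by (induction w) auto

lemma subst_cong:
  assumes "p \<in> nc_polys V" "\<forall>i\<in>V. phi i = psi i"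
  shows "nc_subst phi p = nc_subst psi p"
  unfolding nc_subst_def
proof (rule ext, rule sum.cong[OF refl])
  fix v w assume "w \<in> {w. p w \<noteq> 0}"
  then have "set w \<subseteq> V" using assms(1) by (auto simp: polys_iff)
  then have "E phi w = E psi w" using we_cong assms(2) by blast
  then show "p w * E phi w v = p w * E psi w v" by simp
qed

lemma we_var: "E nc_var w = (dl w :: nat list \<Rightarrow> 'k::comm_ring_1)"
  by (induction w) (simp_all add: const1_dl var_dl dl_mult)

lemma subst_id:
  fixes p :: "nat list \<Rightarrow> 'k::comm_ring_1"
  assumes "fs p" shows "nc_subst nc_var p = p"
proof -
  have "nc_subst nc_var p = (\<lambda>v. \<Sum>w\<in>{w. p w \<noteq> 0}. p w * dl w v)"
    by (simp add: subst_F[OF assms] we_var)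
  also have "\<dots> = p" by (rule expand_fun[symmetric]) (use assms in auto)
  finally show ?thesis .
qed

lemma subst_fix:
  fixes p :: "nat list \<Rightarrow> 'k::comm_ring_1"
  assumes "p \<in> nc_polys V" "\<forall>i\<in>V. phi i = nc_var i"
  shows "nc_subst phi p = p"
  using subst_cong[OF assms] subst_id assms(1) by (auto simp: polys_iff)

lemma subst_var: "nc_subst phi (nc_var i) = (phi i :: nat list \<Rightarrow> 'k::comm_ring_1)"
proof -
  have "nc_subst phi (nc_var i) = (\<lambda>v. \<Sum>w\<in>{[i]}. (nc_var i :: nat list \<Rightarrow> 'k) w * E phi w v)"
    by (rule subst_F) (auto simp: nc_var_def)
  then show ?thesis by (simp add: nc_var_def mult_one_right)
qed

lemma subst_const: "nc_subst phi (nc_const c) = (nc_const c :: nat list \<Rightarrow> 'k::comm_ring_1)"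
proof -
  have "nc_subst phi (nc_const c) = (\<lambda>v. \<Sum>w\<in>{[]}. (nc_const c :: nat list \<Rightarrow> 'k) w * E phi w v)"
    by (rule subst_F) (auto simp: nc_const_def)
  then show ?thesis by (auto simp: nc_const_def)
qed

lemma subst_zero: "nc_subst phi nc_zero = (nc_zero :: nat list \<Rightarrow> 'k::comm_ring_1)"
  by (simp add: nc_subst_def nc_zero_def)

lemma subst_add:
  fixes p q :: "nat list \<Rightarrow> 'k::comm_ring_1"
  assumes "fs p" "fs q"
  shows "nc_subst phi (nc_add p q) = nc_add (nc_subst phi p) (nc_subst phi q)"
proof -
  define F where "F = {w. p w \<noteq> 0} \<union> {w. q w \<noteq> 0}"
  have F: "finite F" using assms by (simp add: F_def)
  have "nc_subst phi (nc_add p q) = (\<lambda>v. \<Sum>w\<in>F. nc_add p q w * E phi w v)"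
    by (rule subst_F[OF F]) (auto simp: F_def nc_add_def)
  also have "\<dots> = nc_add (\<lambda>v. \<Sum>w\<in>F. p w * E phi w v) (\<lambda>v. \<Sum>w\<in>F. q w * E phi w v)"
    by (simp add: nc_add_def distrib_right sum.distrib)
  also have "\<dots> = nc_add (nc_subst phi p) (nc_subst phi q)"
    by (simp add: subst_F[OF F, of p] subst_F[OF F, of q] F_def)
  finally show ?thesis .
qed

lemma subst_neg:
  fixes p :: "nat list \<Rightarrow> 'k::comm_ring_1"
  assumes "fs p"
  shows "nc_subst phi (\<lambda>w. - p w) = (\<lambda>v. - nc_subst phi p v)"
proof -
  have "nc_subst phi (\<lambda>w. - p w) = (\<lambda>v. \<Sum>w\<in>{w. p w \<noteq> 0}. - p w * E phi w v)"
    by (rule subst_F) (use assms in auto)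
  also have "\<dots> = (\<lambda>v. - nc_subst phi p v)"
    by (simp add: subst_F[OF assms] sum_negf)
  finally show ?thesis .
qed


definition ph :: "(nat list \<Rightarrow> 'k::comm_ring_1) \<Rightarrow> (nat list \<Rightarrow> 'k) \<Rightarrow> (nat list \<Rightarrow> 'k) \<Rightarrow> nat \<Rightarrow> nat list \<Rightarrow> 'k" where
  "ph f1 f2 f3 = (\<lambda>i. if i = 1 then nc_add (nc_var 1) f1 else if i = 2 then nc_add (nc_var 2) f2 else nc_add (nc_var 3) f3)"

lemma ph_1[simp]: "ph f1 f2 f3 1 = nc_add (nc_var 1) f1" by (simp add: ph_def)
lemma ph_1'[simp]: "ph f1 f2 f3 (Suc 0) = nc_add (nc_var 1) f1" by (simp add: ph_def)
lemma ph_2[simp]: "ph f1 f2 f3 2 = nc_add (nc_var 2) f2" by (simp add: ph_def)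
lemma ph_3[simp]: "ph f1 f2 f3 3 = nc_add (nc_var 3) f3" by (simp add: ph_def)

lemma add_zero_r[simp]: "nc_add p nc_zero = (p :: nat list \<Rightarrow> 'k::comm_ring_1)"
  by (simp add: nc_add_def nc_zero_def)

lemma neg_zero[simp]: "(\<lambda>w. - (nc_zero :: nat list \<Rightarrow> 'k::comm_ring_1) w) = nc_zero"
  by (simp add: nc_zero_def)

lemma tri_eq: "tri_map f1 f2 f3 = (\<lambda>p\<in>A3. nc_subst (ph f1 f2 f3) p)"
  by (simp add: tri_map_def ph_def)

lemma A3_fs: "p \<in> nc_polys V \<Longrightarrow> fs p"
  by (simp add: polys_iff)

lemma ph_A3:
  fixes f1 :: "nat list \<Rightarrow> 'k::comm_ring_1"
  shows "f1 \<in> A3 \<Longrightarrow> f2 \<in> A3 \<Longrightarrow> f3 \<in> A3 \<Longrightarrow> ph f1 f2 f3 i \<in> A3"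
  by (simp add: ph_def polys_add polys_var)

lemma ph_fs:
  fixes f1 :: "nat list \<Rightarrow> 'k::comm_ring_1"
  shows "f1 \<in> A3 \<Longrightarrow> f2 \<in> A3 \<Longrightarrow> f3 \<in> A3 \<Longrightarrow> \<forall>i. fs (ph f1 f2 f3 i)"
  using ph_A3 A3_fs by blast

lemma tri_apply: "p \<in> A3 \<Longrightarrow> tri_map f1 f2 f3 p = nc_subst (ph f1 f2 f3) p"
  by (simp add: tri_eq)

lemma tri_in:
  fixes f1 :: "nat list \<Rightarrow> 'k::comm_ring_1"
  assumes "f1 \<in> A3" "f2 \<in> A3" "f3 \<in> A3" "p \<in> A3"
  shows "tri_map f1 f2 f3 p \<in> A3"
proof -
  have "\<forall>i\<in>{1,2,3}. ph f1 f2 f3 i \<in> A3" using ph_A3[OF assms(1-3)] by blast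
  then show ?thesis unfolding tri_apply[OF assms(4)] by (rule polys_subst[OF assms(4)])
qed

lemma tri_comp:
  fixes f1 :: "nat list \<Rightarrow> 'k::comm_ring_1"
  assumes f: "f1 \<in> A3" "f2 \<in> A3" "f3 \<in> A3" and g: "g1 \<in> A3" "g2 \<in> A3" "g3 \<in> A3" and p: "p \<in> A3"
  shows "tri_map f1 f2 f3 (tri_map g1 g2 g3 p) = nc_subst (\<lambda>i. nc_subst (ph f1 f2 f3) (ph g1 g2 g3 i)) p"
proof -
  have "tri_map g1 g2 g3 p \<in> A3" using tri_in g p by blast
  then have "tri_map f1 f2 f3 (tri_map g1 g2 g3 p) = nc_subst (ph f1 f2 f3) (nc_subst (ph g1 g2 g3) p)"
    using p by (simp add: tri_apply)
  also have "\<dots> = nc_subst (\<lambda>i. nc_subst (ph f1 f2 f3) (ph g1 g2 g3 i)) p"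
    by (rule subst_comp) (use p A3_fs ph_fs[OF f] ph_fs[OF g] in auto)
  finally show ?thesis .
qed

lemma tri_id:
  fixes f1 :: "nat list \<Rightarrow> 'k::comm_ring_1"
  assumes f: "f1 \<in> A3" "f2 \<in> A3" "f3 \<in> A3" and g: "g1 \<in> A3" "g2 \<in> A3" "g3 \<in> A3" and p: "p \<in> A3"
    and H: "\<forall>i\<in>{1,2,3}. nc_subst (ph f1 f2 f3) (ph g1 g2 g3 i) = nc_var i"
  shows "tri_map f1 f2 f3 (tri_map g1 g2 g3 p) = p"
proof -
  have "tri_map f1 f2 f3 (tri_map g1 g2 g3 p) = nc_subst (\<lambda>i. nc_subst (ph f1 f2 f3) (ph g1 g2 g3 i)) p"
    by (rule tri_comp[OF f g p])
  also have "\<dots> = nc_subst nc_var p"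
    by (rule subst_cong[OF p]) (use H in auto)
  also have "\<dots> = p" using subst_id A3_fs p by blast
  finally show ?thesis .
qed

lemma tri_bij:
  fixes f1 :: "nat list \<Rightarrow> 'k::comm_ring_1"
  assumes f: "f1 \<in> A3" "f2 \<in> A3" "f3 \<in> A3" and g: "g1 \<in> A3" "g2 \<in> A3" "g3 \<in> A3"
    and H1: "\<forall>i\<in>{1,2,3}. nc_subst (ph g1 g2 g3) (ph f1 f2 f3 i) = nc_var i"
    and H2: "\<forall>i\<in>{1,2,3}. nc_subst (ph f1 f2 f3) (ph g1 g2 g3 i) = nc_var i"
  shows "bij_betw (tri_map f1 f2 f3) A3 A3"
proof (rule bij_betw_byWitness[where f'="tri_map g1 g2 g3"])
  show "\<forall>a\<in>A3. tri_map g1 g2 g3 (tri_map f1 f2 f3 a) = a" using tri_id[OF g f _ H1] by blast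
  show "\<forall>a\<in>A3. tri_map f1 f2 f3 (tri_map g1 g2 g3 a) = a" using tri_id[OF f g _ H2] by blast
  show "tri_map f1 f2 f3 ` A3 \<subseteq> A3" using tri_in[OF f] by blast
  show "tri_map g1 g2 g3 ` A3 \<subseteq> A3" using tri_in[OF g] by blast
qed

lemma subst_addvar:
  fixes f :: "nat list \<Rightarrow> 'k::comm_ring_1"
  assumes "fs f"
  shows "nc_subst phi (nc_add (nc_var i) f) = nc_add (phi i) (nc_subst phi f)"
  using subst_add[OF _ assms, of "nc_var i" phi] fs_dl[of "[i]"] by (simp add: var_dl[symmetric] subst_var)

lemma inv_crit:
  fixes f1 :: "nat list \<Rightarrow> 'k::comm_ring_1"
  assumes g: "g1 \<in> A3" "g2 \<in> A3" "g3 \<in> A3"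
    and H: "nc_subst (ph f1 f2 f3) g1 = (\<lambda>w. - f1 w)" "nc_subst (ph f1 f2 f3) g2 = (\<lambda>w. - f2 w)"
           "nc_subst (ph f1 f2 f3) g3 = (\<lambda>w. - f3 w)"
  shows "\<forall>i\<in>{1,2,3}. nc_subst (ph f1 f2 f3) (ph g1 g2 g3 i) = nc_var i"
proof -
  have fs: "fs g1" "fs g2" "fs g3" using g A3_fs by blast+
  have "nc_subst (ph f1 f2 f3) (ph g1 g2 g3 1) = nc_var 1"
    by (simp add: subst_addvar fs H) (simp add: nc_add_def)
  moreover have "nc_subst (ph f1 f2 f3) (ph g1 g2 g3 2) = nc_var 2"
    by (simp add: subst_addvar fs H) (simp add: nc_add_def)
  moreover have "nc_subst (ph f1 f2 f3) (ph g1 g2 g3 3) = nc_var 3"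
    by (simp add: subst_addvar fs H) (simp add: nc_add_def)
  ultimately show ?thesis by auto
qed

lemma U3_intro:
  fixes f1 :: "nat list \<Rightarrow> 'k::field_char_0"
  assumes "f1 \<in> nc_polys {2,3}" "f2 \<in> nc_polys {3}" "f3 \<in> nc_polys {}" "bij_betw (tri_map f1 f2 f3) A3 A3"
  shows "tri_map f1 f2 f3 \<in> U3"
  using assms unfolding U3_def by blast

lemma sub23: "nc_polys {2,3} \<subseteq> A3" by (rule polys_mono) auto
lemma sub3: "nc_polys {3} \<subseteq> A3" by (rule polys_mono) auto
lemma sub0: "nc_polys {} \<subseteq> A3" by (rule polys_mono) auto

lemma U3_c:
  fixes c :: "nat list \<Rightarrow> 'k::field_char_0"
  assumes c: "c \<in> nc_polys {2,3}"
  shows "tri_map c nc_zero nc_zero \<in> U3"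
proof (rule U3_intro[OF c polys_zero polys_zero])
  have cA: "c \<in> A3" using c sub23 by blast
  have ncA: "(\<lambda>w. - c w) \<in> A3" using polys_neg[OF cA] .
  have z: "nc_zero \<in> A3" by (rule polys_zero)
  have fix1: "nc_subst (ph c nc_zero nc_zero) c = c"
    by (rule subst_fix[OF c]) auto
  have fix2: "nc_subst (ph (\<lambda>w. - c w) nc_zero nc_zero) c = c"
    by (rule subst_fix[OF c]) auto
  show "bij_betw (tri_map c nc_zero nc_zero) A3 A3"
  proof (rule tri_bij[OF cA z z ncA z z])
    show "\<forall>i\<in>{1,2,3}. nc_subst (ph (\<lambda>w. - c w) nc_zero nc_zero) (ph c nc_zero nc_zero i) = nc_var i"
      by (rule inv_crit) (use cA z fix2 subst_zero in auto)
    show "\<forall>i\<in>{1,2,3}. nc_subst (ph c nc_zero nc_zero) (ph (\<lambda>w. - c w) nc_zero nc_zero i) = nc_var i"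
    proof (rule inv_crit)
      show "nc_subst (ph c nc_zero nc_zero) (\<lambda>w. - c w) = (\<lambda>w. - c w)"
        using subst_neg[OF A3_fs[OF cA]] fix1 by simp
    qed (use ncA z subst_zero in auto)
  qed
qed

lemma U3_g:
  fixes g :: "nat list \<Rightarrow> 'k::field_char_0"
  assumes c: "g \<in> nc_polys {3}"
  shows "tri_map nc_zero g nc_zero \<in> U3"
proof (rule U3_intro[OF polys_zero c polys_zero])
  have cA: "g \<in> A3" using c sub3 by blast
  have ncA: "(\<lambda>w. - g w) \<in> A3" using polys_neg[OF cA] .
  have z: "nc_zero \<in> A3" by (rule polys_zero)
  have fix1: "nc_subst (ph nc_zero g nc_zero) g = g"
    by (rule subst_fix[OF c]) auto
  have fix2: "nc_subst (ph nc_zero (\<lambda>w. - g w) nc_zero) g = g"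
    by (rule subst_fix[OF c]) auto
  show "bij_betw (tri_map nc_zero g nc_zero) A3 A3"
  proof (rule tri_bij[OF z cA z z ncA z])
    show "\<forall>i\<in>{1,2,3}. nc_subst (ph nc_zero (\<lambda>w. - g w) nc_zero) (ph nc_zero g nc_zero i) = nc_var i"
      by (rule inv_crit) (use cA z fix2 subst_zero in auto)
    show "\<forall>i\<in>{1,2,3}. nc_subst (ph nc_zero g nc_zero) (ph nc_zero (\<lambda>w. - g w) nc_zero i) = nc_var i"
    proof (rule inv_crit)
      show "nc_subst (ph nc_zero g nc_zero) (\<lambda>w. - g w) = (\<lambda>w. - g w)"
        using subst_neg[OF A3_fs[OF cA]] fix1 by simp
    qed (use ncA z subst_zero in auto)
  qed
qed

lemma U3_h:
  shows "tri_map nc_zero nc_zero (nc_const h :: nat list \<Rightarrow> 'k::field_char_0) \<in> U3"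
proof (rule U3_intro[OF polys_zero polys_zero polys_const])
  have cA: "nc_const h \<in> A3" by (rule polys_const)
  have ncA: "nc_const (-h) \<in> A3" by (rule polys_const)
  have z: "nc_zero \<in> A3" by (rule polys_zero)
  have n1: "nc_const (-h) = (\<lambda>w. - nc_const h w)" by (auto simp: nc_const_def)
  have n2: "nc_const h = (\<lambda>w. - nc_const (-h) w)" by (auto simp: nc_const_def)
  show "bij_betw (tri_map nc_zero nc_zero (nc_const h)) A3 A3"
  proof (rule tri_bij[OF z z cA z z ncA])
    show "\<forall>i\<in>{1,2,3}. nc_subst (ph nc_zero nc_zero (nc_const (-h))) (ph nc_zero nc_zero (nc_const h) i) = nc_var i"
    proof (rule inv_crit)
      show "nc_subst (ph nc_zero nc_zero (nc_const (-h))) (nc_const h) = (\<lambda>w. - nc_const (-h) w)"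
        by (simp only: subst_const n2[symmetric])
    qed (use cA z subst_zero in auto)
    show "\<forall>i\<in>{1,2,3}. nc_subst (ph nc_zero nc_zero (nc_const h)) (ph nc_zero nc_zero (nc_const (-h)) i) = nc_var i"
    proof (rule inv_crit)
      show "nc_subst (ph nc_zero nc_zero (nc_const h)) (nc_const (-h)) = (\<lambda>w. - nc_const h w)"
        by (simp only: subst_const n1[symmetric])
    qed (use ncA z subst_zero in auto)
  qed
qed


lemma polys_empty_const: "p \<in> nc_polys {} \<Longrightarrow> p = nc_const (p [])"
  by (rule ext) (auto simp: polys_iff nc_const_def)

lemma comm_x1:
  fixes f1 :: "nat list \<Rightarrow> 'k::comm_ring_1"
  assumes f: "f1 \<in> A3" "f2 \<in> A3" "f3 \<in> A3" and b: "b1 \<in> A3" "b2 \<in> A3" "b3 \<in> A3"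
    and c: "compose A3 (tri_map f1 f2 f3) (tri_map b1 b2 b3) = compose A3 (tri_map b1 b2 b3) (tri_map f1 f2 f3)"
  shows "nc_subst (ph f1 f2 f3) (ph b1 b2 b3 1) = nc_subst (ph b1 b2 b3) (ph f1 f2 f3 1)"
proof -
  have v: "(nc_var 1 :: nat list \<Rightarrow> 'k) \<in> A3" by (rule polys_var) simp
  have "tri_map f1 f2 f3 (tri_map b1 b2 b3 (nc_var 1)) = tri_map b1 b2 b3 (tri_map f1 f2 f3 (nc_var 1))"
    using fun_cong[OF c, of "nc_var 1"] v by (simp add: compose_eq)
  then show ?thesis
    by (simp only: tri_comp[OF f b v] tri_comp[OF b f v] subst_var)
qed

lemma fsv: "fs (nc_var i :: nat list \<Rightarrow> 'k::comm_ring_1)"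
  using fs_dl[of "[i]"] by (simp add: var_dl)

lemma center_sub:
  fixes \<alpha> :: "(nat list \<Rightarrow> 'k::field_char_0) \<Rightarrow> (nat list \<Rightarrow> 'k)"
  assumes "\<alpha> \<in> U3_center"
  shows "\<exists>f1. \<alpha> = tri_map f1 nc_zero nc_zero \<and> f1 \<in> S_inv"
proof -
  obtain f1 f2 f3 where \<alpha>: "\<alpha> = tri_map f1 f2 f3" and f1: "f1 \<in> nc_polys {2,3}"
    and f2: "f2 \<in> nc_polys {3}" and f3: "f3 \<in> nc_polys {}"
    and comm: "\<forall>\<beta>\<in>U3. compose A3 \<alpha> \<beta> = compose A3 \<beta> \<alpha>"
    using assms unfolding U3_center_def U3_def by blast
  have fA: "f1 \<in> A3" "f2 \<in> A3" "f3 \<in> A3" using f1 f2 f3 sub23 sub3 sub0 by blast+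
  have z: "(nc_zero :: nat list \<Rightarrow> 'k) \<in> A3" by (rule polys_zero)
  have fsf: "fs f1" "fs f2" "fs f3" using fA A3_fs by blast+
  have v2: "(nc_var 2 :: nat list \<Rightarrow> 'k) \<in> nc_polys {2,3}" by (rule polys_var) simp
  have v2A: "(nc_var 2 :: nat list \<Rightarrow> 'k) \<in> A3" using v2 sub23 by blast
  have e2: "nc_subst (ph f1 f2 f3) (ph (nc_var 2) nc_zero nc_zero 1) = nc_subst (ph (nc_var 2) nc_zero nc_zero) (ph f1 f2 f3 1)"
    using comm_x1[OF fA v2A z z] comm U3_c[OF v2] \<alpha> by blast
  have fix2: "nc_subst (ph (nc_var 2) nc_zero nc_zero) f1 = f1" by (rule subst_fix[OF f1]) auto
  have e2': "nc_add (nc_add (nc_var 1) f1) (nc_add (nc_var 2) f2) = nc_add (nc_add (nc_var 1) (nc_var 2)) f1"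
    using e2 by (simp add: subst_addvar fsf fsv subst_var fix2)
  have "f2 = nc_zero"
  proof (rule ext)
    fix w
    show "f2 w = nc_zero w"
      using fun_cong[OF e2', of w] by (simp add: nc_add_def nc_zero_def)
  qed
  have v3: "(nc_var 3 :: nat list \<Rightarrow> 'k) \<in> nc_polys {2,3}" by (rule polys_var) simp
  have v3A: "(nc_var 3 :: nat list \<Rightarrow> 'k) \<in> A3" using v3 sub23 by blast
  have e3: "nc_subst (ph f1 f2 f3) (ph (nc_var 3) nc_zero nc_zero 1) = nc_subst (ph (nc_var 3) nc_zero nc_zero) (ph f1 f2 f3 1)"
    using comm_x1[OF fA v3A z z] comm U3_c[OF v3] \<alpha> by blast
  have fix3: "nc_subst (ph (nc_var 3) nc_zero nc_zero) f1 = f1" by (rule subst_fix[OF f1]) auto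
  have e3': "nc_add (nc_add (nc_var 1) f1) (nc_add (nc_var 3) f3) = nc_add (nc_add (nc_var 1) (nc_var 3)) f1"
    using e3 by (simp add: subst_addvar fsf fsv subst_var fix3)
  have "f3 = nc_zero"
  proof (rule ext)
    fix w
    show "f3 w = nc_zero w"
      using fun_cong[OF e3', of w] by (simp add: nc_add_def nc_zero_def)
  qed
  have inv: "nc_subst (ph nc_zero nc_zero nc_zero) f1 = f1" by (rule subst_fix[OF f1]) auto
  have S: "f1 \<in> S_inv"
    unfolding S_inv_def
  proof (intro CollectI conjI ballI allI f1)
    fix g :: "nat list \<Rightarrow> 'k" and h :: 'k
    assume g: "g \<in> nc_polys {3}"
    have gA: "g \<in> A3" using g sub3 by blast
    have hA: "nc_const h \<in> A3" by (rule polys_const)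
    have eg: "nc_subst (ph f1 f2 f3) (ph nc_zero g nc_zero 1) = nc_subst (ph nc_zero g nc_zero) (ph f1 f2 f3 1)"
      using comm_x1[OF fA z gA z] comm U3_g[OF g] \<alpha> by blast
    have eg': "nc_add (nc_var 1) f1 = nc_add (nc_var 1) (nc_subst (ph nc_zero g nc_zero) f1)"
      using eg by (simp add: subst_addvar fsf fsv subst_var)
    have Gf: "nc_subst (ph nc_zero g nc_zero) f1 = f1"
    proof (rule ext)
      fix w
      show "nc_subst (ph nc_zero g nc_zero) f1 w = f1 w"
        using fun_cong[OF eg', of w] by (simp add: nc_add_def)
    qed
    have eh: "nc_subst (ph f1 f2 f3) (ph nc_zero nc_zero (nc_const h) 1) = nc_subst (ph nc_zero nc_zero (nc_const h)) (ph f1 f2 f3 1)"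
      using comm_x1[OF fA z z hA] comm U3_h \<alpha> by blast
    have eh': "nc_add (nc_var 1) f1 = nc_add (nc_var 1) (nc_subst (ph nc_zero nc_zero (nc_const h)) f1)"
      using eh by (simp add: subst_addvar fsf fsv subst_var)
    have Hf: "nc_subst (ph nc_zero nc_zero (nc_const h)) f1 = f1"
    proof (rule ext)
      fix w
      show "nc_subst (ph nc_zero nc_zero (nc_const h)) f1 w = f1 w"
        using fun_cong[OF eh', of w] by (simp add: nc_add_def)
    qed
    have phfs: "\<forall>i. fs (ph nc_zero g nc_zero i)" "\<forall>i. fs (ph nc_zero nc_zero (nc_const h) i)"
      using ph_fs[OF z gA z] ph_fs[OF z z hA] by blast+
    have "nc_subst (\<lambda>i. if i = 2 then nc_add (nc_var 2) g else if i = 3 then nc_add (nc_var 3) (nc_const h) else nc_var i) f1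
        = nc_subst (\<lambda>i. nc_subst (ph nc_zero g nc_zero) (ph nc_zero nc_zero (nc_const h) i)) f1"
    proof (rule subst_cong[OF f1], intro ballI)
      fix i :: nat assume "i \<in> {2,3}"
      then show "(if i = 2 then nc_add (nc_var 2) g else if i = 3 then nc_add (nc_var 3) (nc_const h) else nc_var i)
          = nc_subst (ph nc_zero g nc_zero) (ph nc_zero nc_zero (nc_const h) i)"
        by (auto simp: subst_addvar subst_var fsv fs_const subst_const)
    qed
    also have "\<dots> = nc_subst (ph nc_zero g nc_zero) (nc_subst (ph nc_zero nc_zero (nc_const h)) f1)"
      by (rule subst_comp[symmetric]) (use fsf phfs in auto)
    also have "\<dots> = f1" using Gf Hf by simp
    finally show "nc_subst (\<lambda>i. if i = 2 then nc_add (nc_var 2) g else if i = 3 then nc_add (nc_var 3) (nc_const h) else nc_var i) f1 = f1" .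
  qed
  show ?thesis using S \<alpha> \<open>f2 = nc_zero\<close> \<open>f3 = nc_zero\<close> by blast
qed


lemma center_sup:
  fixes f1 :: "nat list \<Rightarrow> 'k::field_char_0"
  assumes S: "f1 \<in> S_inv"
  shows "tri_map f1 nc_zero nc_zero \<in> U3_center"
proof -
  have f1: "f1 \<in> nc_polys {2,3}" using S by (simp add: S_inv_def)
  have fA: "f1 \<in> A3" using f1 sub23 by blast
  have z: "(nc_zero :: nat list \<Rightarrow> 'k) \<in> A3" by (rule polys_zero)
  have fsf: "fs f1" using fA A3_fs by blast
  have "compose A3 (tri_map f1 nc_zero nc_zero) \<beta> = compose A3 \<beta> (tri_map f1 nc_zero nc_zero)"
    if \<beta>: "\<beta> \<in> U3" for \<beta>
  proof -
    obtain b1 b2 b3 where \<beta>eq: "\<beta> = tri_map b1 b2 b3" and b1: "b1 \<in> nc_polys {2,3}"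
      and b2: "b2 \<in> nc_polys {3}" and b3: "b3 \<in> nc_polys {}"
      using \<beta> unfolding U3_def by blast
    have bA: "b1 \<in> A3" "b2 \<in> A3" "b3 \<in> A3" using b1 b2 b3 sub23 sub3 sub0 by blast+
    have fsb: "fs b1" "fs b2" "fs b3" using bA A3_fs by blast+
    have b3c: "b3 = nc_const (b3 [])" by (rule polys_empty_const[OF b3])
    have fb1: "nc_subst (ph f1 nc_zero nc_zero) b1 = b1" by (rule subst_fix[OF b1]) auto
    have fb2: "nc_subst (ph f1 nc_zero nc_zero) b2 = b2" by (rule subst_fix[OF b2]) auto
    have fb3: "nc_subst (ph f1 nc_zero nc_zero) b3 = b3" by (rule subst_fix[OF b3]) auto
    have Sf: "nc_subst (\<lambda>i. if i = 2 then nc_add (nc_var 2) b2 else if i = 3 then nc_add (nc_var 3) (nc_const (b3 [])) else nc_var i) f1 = f1"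
      using S b2 unfolding S_inv_def by blast
    have ff: "nc_subst (ph b1 b2 b3) f1 = f1"
    proof -
      have "nc_subst (ph b1 b2 b3) f1 = nc_subst (\<lambda>i. if i = 2 then nc_add (nc_var 2) b2 else if i = 3 then nc_add (nc_var 3) (nc_const (b3 [])) else nc_var i) f1"
        by (rule subst_cong[OF f1]) (use b3c in auto)
      then show ?thesis using Sf by simp
    qed
    have key: "\<forall>i\<in>{1,2,3}. nc_subst (ph f1 nc_zero nc_zero) (ph b1 b2 b3 i) = nc_subst (ph b1 b2 b3) (ph f1 nc_zero nc_zero i)"
    proof -
      have "nc_subst (ph f1 nc_zero nc_zero) (ph b1 b2 b3 1) = nc_subst (ph b1 b2 b3) (ph f1 nc_zero nc_zero 1)"
      proof -
        have "nc_subst (ph f1 nc_zero nc_zero) (ph b1 b2 b3 1) = nc_add (nc_add (nc_var 1) f1) b1"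
          by (simp add: subst_addvar fsb fb1)
        moreover have "nc_subst (ph b1 b2 b3) (ph f1 nc_zero nc_zero 1) = nc_add (nc_add (nc_var 1) b1) f1"
          by (simp add: subst_addvar fsf ff)
        ultimately show ?thesis by (auto simp: nc_add_def algebra_simps)
      qed
      moreover have "nc_subst (ph f1 nc_zero nc_zero) (ph b1 b2 b3 2) = nc_subst (ph b1 b2 b3) (ph f1 nc_zero nc_zero 2)"
        by (simp add: subst_addvar fsb fb2 subst_var)
      moreover have "nc_subst (ph f1 nc_zero nc_zero) (ph b1 b2 b3 3) = nc_subst (ph b1 b2 b3) (ph f1 nc_zero nc_zero 3)"
        by (simp add: subst_addvar fsb fb3 subst_var)
      ultimately show ?thesis by auto
    qed
    show ?thesis
    proof (rule ext)
      fix p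
      show "compose A3 (tri_map f1 nc_zero nc_zero) \<beta> p = compose A3 \<beta> (tri_map f1 nc_zero nc_zero) p"
      proof (cases "p \<in> A3")
        case True
        have "compose A3 (tri_map f1 nc_zero nc_zero) \<beta> p
            = nc_subst (\<lambda>i. nc_subst (ph f1 nc_zero nc_zero) (ph b1 b2 b3 i)) p"
          using True by (simp add: compose_eq \<beta>eq tri_comp[OF fA z z bA True])
        also have "\<dots> = nc_subst (\<lambda>i. nc_subst (ph b1 b2 b3) (ph f1 nc_zero nc_zero i)) p"
          by (rule subst_cong[OF True]) (use key in auto)
        also have "\<dots> = compose A3 \<beta> (tri_map f1 nc_zero nc_zero) p"
          using True by (simp add: compose_eq \<beta>eq tri_comp[OF bA fA z z True])
        finally show ?thesis .
      next
        case False
        then show ?thesis by (simp add: compose_def)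
      qed
    qed
  qed
  then show ?thesis unfolding U3_center_def using U3_c[OF f1] by blast
qed

theorem theorem1:
  shows "(U3_center :: ((nat list \<Rightarrow> 'k::field_char_0) \<Rightarrow> (nat list \<Rightarrow> 'k)) set)
           = {tri_map f1 nc_zero nc_zero | f1. f1 \<in> S_inv}"
  using center_sub center_sup by blast

end
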